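(* Let $X$ be a non-empty finite set and $\mathcal{P}$ a partition of $X$ with distinct block sizes $l_1<\cdots<l_r$. Let $U$ be a set containing one element of $\mathcal{B}_i$ for each $i\le r-1$, and one element of $\mathcal{C}_i$ for each $i\in\{1,\ldots,r\}$ such that either $i=1$ and $l_1\ge 2$, or $i\ge 2$ and $l_i-l_{i-1}\ge 2$. Then $\Sigma(X,\mathcal{P})$ is generated as a semigroup by $S(X,\mathcal{P})\cup U$.
   Context: $T(X,\mathcal{P})$ is the semigroup (under composition) of maps $f:X\to X$ mapping each block of $\mathcal{P}$ into some block; $S(X,\mathcal{P})$ is its group of units; $\Sigma(X,\mathcal{P})$ is the set of $f\in T(X,\mathcal{P})$ whose image intersects every block. For $i\le r-1$, $\mathcal{B}_i$ is the set of $f\in\Sigma(X,\mathcal{P})$ for which there are blocks $P_j,P_{j'},P_k,P_{k'}$ (possibly $j=j'$ or $k=k'$) with $|P_j|=|P_{j'}|=l_i$, $|P_k|=|P_{k'}|=l_{i+1}$, such that $f$ maps $P_j$ injectively into $P_k$, maps $P_{k'}$ onto $P_{j'}$, and maps every other block bijectively onto a block of the same size. For $i\le r$, $\mathcal{C}_i$ is the set of $f\in\Sigma(X,\mathcal{P})$ mapping each block into a block of the same size, such that one block of size $l_i$ has image of size $l_i-1$ and all other blocks are mapped injectively. *)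

theory Defs
  imports Main "HOL-Library.FuncSet" "HOL-Library.Disjoint_Sets"
begin

text \<open>Maps X -> X are represented as extensional functions (value undefined outside X);
  composition is FuncSet's compose X.\<close>

definition T_map :: "'a set \<Rightarrow> 'a set set \<Rightarrow> ('a \<Rightarrow> 'a) set" where
  "T_map X P = {f \<in> X \<rightarrow>\<^sub>E X. \<forall>B\<in>P. \<exists>C\<in>P. f ` B \<subseteq> C}"

definition S_map :: "'a set \<Rightarrow> 'a set set \<Rightarrow> ('a \<Rightarrow> 'a) set" where
  "S_map X P = {f \<in> T_map X P. \<exists>g\<in>T_map X P.
      compose X f g = restrict id X \<and> compose X g f = restrict id X}"

definition Sigma_map :: "'a set \<Rightarrow> 'a set set \<Rightarrow> ('a \<Rightarrow> 'a) set" where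
  "Sigma_map X P = {f \<in> T_map X P. \<forall>B\<in>P. f ` X \<inter> B \<noteq> {}}"

text \<open>Number of distinct block sizes, and the i-th smallest block size (1-based).\<close>
definition num_sizes :: "'a set set \<Rightarrow> nat" where
  "num_sizes P = card (card ` P)"

definition lsize :: "'a set set \<Rightarrow> nat \<Rightarrow> nat" where
  "lsize P i = sorted_list_of_set (card ` P) ! (i - 1)"

definition B_set :: "'a set \<Rightarrow> 'a set set \<Rightarrow> nat \<Rightarrow> ('a \<Rightarrow> 'a) set" where
  "B_set X P i = {f \<in> Sigma_map X P. \<exists>Pj\<in>P. \<exists>Pj'\<in>P. \<exists>Pk\<in>P. \<exists>Pk'\<in>P.
      card Pj = lsize P i \<and> card Pj' = lsize P i \<and>
      card Pk = lsize P (i+1) \<and> card Pk' = lsize P (i+1) \<and>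
      inj_on f Pj \<and> f ` Pj \<subseteq> Pk \<and> f ` Pk' = Pj' \<and>
      (\<forall>Q\<in>P - {Pj, Pk'}. \<exists>R\<in>P. card R = card Q \<and> bij_betw f Q R)}"

definition C_set :: "'a set \<Rightarrow> 'a set set \<Rightarrow> nat \<Rightarrow> ('a \<Rightarrow> 'a) set" where
  "C_set X P i = {f \<in> Sigma_map X P.
      (\<forall>Q\<in>P. \<exists>R\<in>P. card R = card Q \<and> f ` Q \<subseteq> R) \<and>
      (\<exists>B\<in>P. card B = lsize P i \<and> card (f ` B) = lsize P i - 1 \<and>
         (\<forall>Q\<in>P - {B}. inj_on f Q))}"

inductive_set sgen :: "'a set \<Rightarrow> ('a \<Rightarrow> 'a) set \<Rightarrow> ('a \<Rightarrow> 'a) set" for X G where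
  gen: "g \<in> G \<Longrightarrow> g \<in> sgen X G"
| comp: "f \<in> sgen X G \<Longrightarrow> g \<in> sgen X G \<Longrightarrow> compose X f g \<in> sgen X G"

end

theory Submission
  imports Defs
begin

lemma ext_bij:
  assumes "finite R" "finite R'" "card R = card R'" "A \<subseteq> R" "inj_on \<rho> A" "\<rho> ` A \<subseteq> R'"
  shows "\<exists>g. bij_betw g R R' \<and> (\<forall>a\<in>A. g a = \<rho> a)"
proof -
  have fA: "finite A" using assms finite_subset by blast
  have "card (R - A) = card (R' - \<rho> ` A)"
    using assms fA by (simp add: card_Diff_subset card_image)
  then obtain g0 where g0: "bij_betw g0 (R - A) (R' - \<rho> ` A)"
    using finite_same_card_bij assms by (meson finite_Diff)
  define g where "g = (\<lambda>z. if z \<in> A then \<rho> z else g0 z)"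
  have b1: "bij_betw g A (\<rho> ` A)"
    unfolding g_def bij_betw_def using assms(5) by (auto simp: inj_on_def)
  have b2: "bij_betw g (R - A) (R' - \<rho> ` A)"
    using g0 unfolding g_def by (rule bij_betw_cong[THEN iffD1, rotated]) auto
  have "bij_betw g (A \<union> (R - A)) (\<rho> ` A \<union> (R' - \<rho> ` A))"
    by (rule bij_betw_combine[OF b1 b2]) auto
  moreover have "A \<union> (R - A) = R" "\<rho> ` A \<union> (R' - \<rho> ` A) = R'" using assms by auto
  ultimately show ?thesis unfolding g_def by auto
qed

locale part =
  fixes X :: "'a set" and P :: "'a set set"
  assumes finX: "finite X" and pt: "partition_on X P"
begin

lemma finP: "finite P" using finite_elements[OF finX pt] .
lemma UnP: "\<Union>P = X" using partition_onD1[OF pt] by simp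
lemma nonemptyB: "B \<in> P \<Longrightarrow> B \<noteq> {}" using partition_onD3[OF pt] by auto
lemma subX: "B \<in> P \<Longrightarrow> B \<subseteq> X" using UnP by auto
lemma finB: "B \<in> P \<Longrightarrow> finite B" using subX finX finite_subset by blast
lemma disj: "B \<in> P \<Longrightarrow> C \<in> P \<Longrightarrow> x \<in> B \<Longrightarrow> x \<in> C \<Longrightarrow> B = C"
  using partition_onD2[OF pt] by (auto simp: disjoint_def)

definition blk :: "'a \<Rightarrow> 'a set" where "blk x = (THE B. B \<in> P \<and> x \<in> B)"

lemma blk_eq: "B \<in> P \<Longrightarrow> x \<in> B \<Longrightarrow> blk x = B"
  unfolding blk_def by (rule the_equality) (auto dest: disj)

lemma blk: assumes "x \<in> X" shows "blk x \<in> P" "x \<in> blk x"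
proof -
  obtain B where "B \<in> P" "x \<in> B" using assms UnP by auto
  then show "blk x \<in> P" "x \<in> blk x" using blk_eq by auto
qed

lemma T_into: "f \<in> T_map X P \<Longrightarrow> x \<in> X \<Longrightarrow> f x \<in> X"
  unfolding T_map_def by auto

lemma T_blk: assumes "f \<in> T_map X P" "Q \<in> P" "z1 \<in> Q" "z2 \<in> Q" shows "blk (f z1) = blk (f z2)"
proof -
  obtain C where "C \<in> P" "f ` Q \<subseteq> C" using assms unfolding T_map_def by auto
  then have "blk (f z1) = C" "blk (f z2) = C" using assms blk_eq by auto
  then show ?thesis by simp
qed

definition phi :: "('a \<Rightarrow> 'a) \<Rightarrow> 'a set \<Rightarrow> 'a set" where
  "phi f Q = blk (f (SOME z. z \<in> Q))"

lemma phi: assumes "f \<in> T_map X P" "Q \<in> P" "z \<in> Q"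
  shows "blk (f z) = phi f Q" "phi f Q \<in> P" "f z \<in> phi f Q"
proof -
  have s: "(SOME z. z \<in> Q) \<in> Q" using assms by (meson someI)
  show e: "blk (f z) = phi f Q" unfolding phi_def using T_blk[OF assms(1,2) assms(3) s] .
  have "z \<in> X" using assms subX by auto
  then have "f z \<in> X" using assms T_into by auto
  then show "phi f Q \<in> P" "f z \<in> phi f Q" using blk(1)[of "f z"] blk(2)[of "f z"] e by auto
qed

lemma phi_img: "f \<in> T_map X P \<Longrightarrow> Q \<in> P \<Longrightarrow> f ` Q \<subseteq> phi f Q"
  using phi by auto

lemma phi_bij: assumes "f \<in> Sigma_map X P" shows "bij_betw (phi f) P P"
proof -
  have T: "f \<in> T_map X P" using assms unfolding Sigma_map_def by auto
  have im: "phi f ` P \<subseteq> P" using phi(2)[OF T] nonemptyB by blast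
  have "P \<subseteq> phi f ` P"
  proof
    fix C assume C: "C \<in> P"
    then obtain z where z: "z \<in> X" "f z \<in> C" using assms unfolding Sigma_map_def by blast
    then have "phi f (blk z) = C" using phi(1)[OF T blk(1)[OF z(1)] blk(2)[OF z(1)]] blk_eq C by auto
    then show "C \<in> phi f ` P" using blk(1)[OF z(1)] by auto
  qed
  then have "inj_on (phi f) P" using finite_surj_inj finP by blast
  then show ?thesis using im \<open>P \<subseteq> phi f ` P\<close> unfolding bij_betw_def by auto
qed

lemma sig_blk: assumes "f \<in> Sigma_map X P" "z1 \<in> X" "z2 \<in> X" "blk (f z1) = blk (f z2)"
  shows "blk z1 = blk z2"
proof -
  have T: "f \<in> T_map X P" using assms unfolding Sigma_map_def by auto
  have "phi f (blk z1) = phi f (blk z2)"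
    using phi(1)[OF T blk(1) blk(2)] assms by metis
  then show ?thesis using phi_bij[OF assms(1)] blk(1) assms unfolding bij_betw_def inj_on_def by blast
qed

lemma sig_T: "f \<in> Sigma_map X P \<Longrightarrow> f \<in> T_map X P" unfolding Sigma_map_def by auto

lemma compose_T: assumes "f \<in> T_map X P" "g \<in> T_map X P" shows "compose X f g \<in> T_map X P"
proof -
  have "compose X f g \<in> X \<rightarrow>\<^sub>E X"
    using assms unfolding T_map_def compose_def by auto
  moreover have "\<exists>C\<in>P. compose X f g ` B \<subseteq> C" if B: "B \<in> P" for B
  proof -
    obtain C where C: "C \<in> P" "g ` B \<subseteq> C" using assms B unfolding T_map_def by auto
    obtain D where D: "D \<in> P" "f ` C \<subseteq> D" using assms C unfolding T_map_def by auto
    have "compose X f g ` B \<subseteq> D" using C D subX B unfolding compose_def by auto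
    then show ?thesis using D by auto
  qed
  ultimately show ?thesis unfolding T_map_def by auto
qed

lemma sig_compose: assumes "f \<in> Sigma_map X P" "g \<in> Sigma_map X P"
  shows "compose X f g \<in> Sigma_map X P"
proof -
  have Tf: "f \<in> T_map X P" and Tg: "g \<in> T_map X P" using assms sig_T by auto
  have "compose X f g ` X \<inter> C \<noteq> {}" if C: "C \<in> P" for C
  proof -
    obtain w where w: "w \<in> X" "f w \<in> C" using assms C unfolding Sigma_map_def by blast
    obtain z where z: "z \<in> X" "g z \<in> blk w" using assms blk(1)[OF w(1)] unfolding Sigma_map_def by blast
    have "blk (f (g z)) = blk (f w)" using T_blk[OF Tf blk(1)[OF w(1)] z(2) blk(2)[OF w(1)]] .
    moreover have "blk (f w) = C" using blk_eq C w by auto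
    moreover have "f (g z) \<in> X" using T_into Tf Tg z by auto
    ultimately have "f (g z) \<in> C" using blk by metis
    then show ?thesis using z unfolding compose_def by auto
  qed
  then show ?thesis using compose_T[OF Tf Tg] unfolding Sigma_map_def by auto
qed

lemma S_props: assumes "s \<in> S_map X P"
  shows "s \<in> T_map X P" "inj_on s X" "s ` X = X"
proof -
  obtain g where g: "g \<in> T_map X P" "compose X s g = restrict id X" "compose X g s = restrict id X"
    using assms unfolding S_map_def by auto
  show T: "s \<in> T_map X P" using assms unfolding S_map_def by auto
  show "inj_on s X"
  proof (rule inj_onI)
    fix x y assume "x \<in> X" "y \<in> X" "s x = s y"
    then have "compose X g s x = compose X g s y" unfolding compose_def by auto
    then show "x = y" using g(3) \<open>x \<in> X\<close> \<open>y \<in> X\<close> by auto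
  qed
  have "y \<in> s ` X" if "y \<in> X" for y
  proof -
    have "s (g y) = y" using fun_cong[OF g(2), of y] that unfolding compose_def by auto
    then show ?thesis using T_into[OF g(1) that] by force
  qed
  then show "s ` X = X" using T_into[OF T] by auto
qed

lemma S_sig: assumes "s \<in> S_map X P" shows "s \<in> Sigma_map X P"
proof -
  have "s ` X \<inter> C \<noteq> {}" if C: "C \<in> P" for C
  proof -
    obtain c where "c \<in> C" using nonemptyB C by blast
    then show ?thesis using S_props(3)[OF assms] subX[OF C] by auto
  qed
  then show ?thesis using S_props(1)[OF assms] unfolding Sigma_map_def by auto
qed

lemma unit_crit:
  assumes "s \<in> X \<rightarrow>\<^sub>E X" "bij_betw s X X" "\<And>R. R \<in> P \<Longrightarrow> s ` R \<in> P"
  shows "s \<in> S_map X P"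
proof -
  have T: "s \<in> T_map X P" using assms unfolding T_map_def by auto
  define g where "g = restrict (inv_into X s) X"
  have inj: "inj_on s X" and sur: "s ` X = X" using assms(2) unfolding bij_betw_def by auto
  have gX: "g \<in> X \<rightarrow>\<^sub>E X" unfolding g_def using sur by (auto intro: inv_into_into)
  have "\<exists>D\<in>P. g ` C \<subseteq> D" if C: "C \<in> P" for C
  proof -
    obtain c where c: "c \<in> C" using nonemptyB C by blast
    then have "c \<in> X" using subX C by auto
    then obtain x where x: "x \<in> X" "s x = c" using sur by (metis imageE)
    have R: "s ` blk x \<in> P" using assms(3) blk(1)[OF x(1)] .
    have "s ` blk x = C" using disj[OF R C] blk(2)[OF x(1)] x c by auto
    moreover have "blk x \<subseteq> X" using subX blk(1)[OF x(1)] by auto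
    ultimately have "g ` C \<subseteq> blk x" unfolding g_def using inj sur
      by (auto simp: inv_into_f_f subsetD)
    then show ?thesis using blk(1)[OF x(1)] by auto
  qed
  then have gT: "g \<in> T_map X P" using gX unfolding T_map_def by auto
  have "compose X s g = restrict id X"
    unfolding compose_def g_def using sur by (intro ext) (auto simp: f_inv_into_f)
  moreover have "compose X g s = restrict id X"
    unfolding compose_def g_def using inj sur by (intro ext) (auto simp: inv_into_f_f)
  ultimately show ?thesis using T gT unfolding S_map_def by auto
qed

lemma UC:
  assumes psi: "bij_betw \<psi> P P" "\<forall>R\<in>P. card (\<psi> R) = card R"
    and A: "A \<subseteq> X" "inj_on \<rho> A" "\<forall>a\<in>A. \<rho> a \<in> \<psi> (blk a)"
  shows "\<exists>\<sigma>\<in>S_map X P. (\<forall>a\<in>A. \<sigma> a = \<rho> a) \<and> (\<forall>R\<in>P. \<sigma> ` R = \<psi> R)"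
proof -
  have "\<forall>R\<in>P. \<exists>g. bij_betw g R (\<psi> R) \<and> (\<forall>a\<in>A\<inter>R. g a = \<rho> a)"
  proof
    fix R assume R: "R \<in> P"
    have \<psi>R: "\<psi> R \<in> P" using psi(1) R bij_betwE by blast
    have "\<rho> ` (A \<inter> R) \<subseteq> \<psi> R" using A(3) R blk_eq by auto
    then show "\<exists>g. bij_betw g R (\<psi> R) \<and> (\<forall>a\<in>A\<inter>R. g a = \<rho> a)"
      using ext_bij[OF finB[OF R] finB[OF \<psi>R] _ _ inj_on_subset[OF A(2)]] psi(2) R by auto
  qed
  from bchoice[OF this] obtain G where G: "\<forall>R\<in>P. bij_betw (G R) R (\<psi> R) \<and> (\<forall>a\<in>A\<inter>R. G R a = \<rho> a)"
    by blast
  define \<sigma> where "\<sigma> = restrict (\<lambda>z. G (blk z) z) X"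
  have \<psi>P: "\<psi> R \<in> P" if "R \<in> P" for R using psi(1) that bij_betwE by blast
  have val: "\<sigma> z \<in> \<psi> (blk z)" if z: "z \<in> X" for z
  proof -
    have "\<sigma> z = G (blk z) z" using z unfolding \<sigma>_def by simp
    moreover have "bij_betw (G (blk z)) (blk z) (\<psi> (blk z))" using G blk(1)[OF z] by blast
    ultimately show ?thesis using blk(2)[OF z] bij_betwE by metis
  qed
  have img: "\<sigma> ` R = \<psi> R" if R: "R \<in> P" for R
  proof -
    have "\<sigma> ` R = G R ` R"
    proof (rule image_cong[OF refl])
      fix z assume "z \<in> R" then show "\<sigma> z = G R z" unfolding \<sigma>_def using R subX blk_eq by auto
    qed
    then show ?thesis using G R unfolding bij_betw_def by auto
  qed
  have sX: "\<sigma> \<in> X \<rightarrow>\<^sub>E X"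
  proof -
    have "\<forall>z\<in>X. G (blk z) z \<in> X"
    proof
      fix z assume z: "z \<in> X"
      have "\<sigma> z \<in> X" using val[OF z] subX[OF \<psi>P[OF blk(1)[OF z]]] by blast
      then show "G (blk z) z \<in> X" using z unfolding \<sigma>_def by simp
    qed
    then show ?thesis unfolding \<sigma>_def by (simp add: restrict_PiE_iff)
  qed
  have inj: "inj_on \<sigma> X"
  proof (rule inj_onI)
    fix z1 z2 assume z: "z1 \<in> X" "z2 \<in> X" "\<sigma> z1 = \<sigma> z2"
    have "\<psi> (blk z1) = \<psi> (blk z2)" using disj[OF \<psi>P[OF blk(1)[OF z(1)]] \<psi>P[OF blk(1)[OF z(2)]]] val z by metis
    then have b: "blk z1 = blk z2" using psi(1) blk(1) z unfolding bij_betw_def inj_on_def by metis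
    have "G (blk z1) z1 = G (blk z1) z2" using z b unfolding \<sigma>_def by auto
    then show "z1 = z2" using G blk[OF z(1)] blk[OF z(2)] b unfolding bij_betw_def inj_on_def by metis
  qed
  have "\<sigma> ` X = X"
  proof -
    have "\<sigma> ` X = \<sigma> ` \<Union>P" using UnP by simp
    also have "\<dots> = \<Union> ((\<lambda>R. \<sigma> ` R) ` P)" by auto
    also have "\<dots> = \<Union> (\<psi> ` P)" using img by auto
    also have "\<dots> = X" using psi(1) UnP unfolding bij_betw_def by auto
    finally show ?thesis .
  qed
  then have "\<sigma> \<in> S_map X P" using unit_crit[OF sX] inj img \<psi>P unfolding bij_betw_def by auto
  moreover have "\<forall>a\<in>A. \<sigma> a = \<rho> a"
  proof
    fix a assume a: "a \<in> A"
    then have aX: "a \<in> X" using A(1) by auto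
    have "G (blk a) a = \<rho> a" using G blk[OF aX] a by blast
    then show "\<sigma> a = \<rho> a" using aX unfolding \<sigma>_def by simp
  qed
  ultimately show ?thesis using img by blast
qed

lemma TL:
  assumes SG: "S_map X P \<subseteq> Gen" and h: "h \<in> sgen X Gen" "h \<in> Sigma_map X P"
    and f: "f \<in> Sigma_map X P"
    and K: "\<forall>z1\<in>X. \<forall>z2\<in>X. blk z1 = blk z2 \<longrightarrow> (h z1 = h z2 \<longleftrightarrow> f z1 = f z2)"
    and Sz: "\<forall>z\<in>X. card (blk (h z)) = card (blk (f z))"
  shows "f \<in> sgen X Gen"
proof -
  have Th: "h \<in> T_map X P" and Tf: "f \<in> T_map X P" using h f sig_T by auto
  have K': "h z1 = h z2 \<longleftrightarrow> f z1 = f z2" if z: "z1 \<in> X" "z2 \<in> X" for z1 z2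
  proof (cases "blk z1 = blk z2")
    case True then show ?thesis using K z by auto
  next
    case False
    then have "h z1 \<noteq> h z2" "f z1 \<noteq> f z2" using sig_blk[OF h(2) z] sig_blk[OF f z] by auto
    then show ?thesis by simp
  qed
  define \<psi> where "\<psi> R = blk (f (SOME z. z \<in> X \<and> h z \<in> R))" for R
  have \<psi>_eq: "\<psi> R = blk (f z)" if z: "z \<in> X" "R \<in> P" "h z \<in> R" for z R
  proof -
    define z' where "z' = (SOME z. z \<in> X \<and> h z \<in> R)"
    have z': "z' \<in> X" "h z' \<in> R" unfolding z'_def using someI[of "\<lambda>z. z \<in> X \<and> h z \<in> R"] z by auto
    have "blk (h z') = blk (h z)" using blk_eq z z' by auto
    then have "blk z' = blk z" using sig_blk[OF h(2) z'(1) z(1)] by auto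
    then have "blk (f z') = blk (f z)" using T_blk[OF Tf blk(1)[OF z(1)] _ blk(2)[OF z(1)]] blk(2)[OF z'(1)] by metis
    then show ?thesis unfolding \<psi>_def z'_def[symmetric] .
  qed
  have hit: "\<exists>z\<in>X. h z \<in> R" if "R \<in> P" for R using h(2) that unfolding Sigma_map_def by blast
  have \<psi>P: "\<psi> R \<in> P" if R: "R \<in> P" for R
  proof -
    obtain z where "z \<in> X" "h z \<in> R" using hit R by blast
    then show ?thesis using \<psi>_eq R blk(1) T_into[OF Tf] by metis
  qed
  have sur: "P \<subseteq> \<psi> ` P"
  proof
    fix C assume C: "C \<in> P"
    then obtain z where z: "z \<in> X" "f z \<in> C" using f unfolding Sigma_map_def by blast
    have hz: "h z \<in> X" using T_into[OF Th z(1)] .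
    have "\<psi> (blk (h z)) = blk (f z)" using \<psi>_eq[OF z(1) blk(1)[OF hz] blk(2)[OF hz]] .
    also have "\<dots> = C" using blk_eq C z by auto
    finally show "C \<in> \<psi> ` P" using blk(1)[OF hz] by force
  qed
  have bij: "bij_betw \<psi> P P"
    using finite_surj_inj[OF finP sur] sur \<psi>P unfolding bij_betw_def by auto
  have card: "\<forall>R\<in>P. card (\<psi> R) = card R"
  proof
    fix R assume R: "R \<in> P"
    obtain z where z: "z \<in> X" "h z \<in> R" using hit R by blast
    then show "card (\<psi> R) = card R" using \<psi>_eq[OF z(1) R z(2)] Sz blk_eq[OF R z(2)] by metis
  qed
  define \<rho> where "\<rho> p = f (SOME z. z \<in> X \<and> h z = p)" for p
  have \<rho>_eq: "\<rho> (h z) = f z" if z: "z \<in> X" for z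
  proof -
    define z' where "z' = (SOME z'. z' \<in> X \<and> h z' = h z)"
    have z': "z' \<in> X" "h z' = h z" unfolding z'_def using someI[of "\<lambda>z'. z' \<in> X \<and> h z' = h z"] z by auto
    then have "f z' = f z" using K' z by auto
    then show ?thesis unfolding \<rho>_def z'_def[symmetric] .
  qed
  have A1: "h ` X \<subseteq> X" using T_into[OF Th] by auto
  have A2: "inj_on \<rho> (h ` X)"
  proof (rule inj_onI)
    fix p1 p2 assume "p1 \<in> h ` X" "p2 \<in> h ` X" "\<rho> p1 = \<rho> p2"
    then obtain z1 z2 where "z1 \<in> X" "z2 \<in> X" "p1 = h z1" "p2 = h z2" "f z1 = f z2" using \<rho>_eq by auto
    then show "p1 = p2" using K' by auto
  qed
  have A3: "\<forall>a\<in>h ` X. \<rho> a \<in> \<psi> (blk a)"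
  proof
    fix a assume "a \<in> h ` X"
    then obtain z where z: "z \<in> X" "a = h z" by auto
    have hz: "h z \<in> X" using A1 z by auto
    have "\<psi> (blk a) = blk (f z)" using \<psi>_eq[OF z(1) blk(1)[OF hz] blk(2)[OF hz]] z by simp
    then show "\<rho> a \<in> \<psi> (blk a)" using \<rho>_eq z blk(2) T_into[OF Tf] by metis
  qed
  obtain \<sigma> where \<sigma>: "\<sigma> \<in> S_map X P" "\<forall>a\<in>h ` X. \<sigma> a = \<rho> a"
    using UC[OF bij card A1 A2 A3] by blast
  have "compose X \<sigma> h = f"
  proof (rule ext)
    fix x show "compose X \<sigma> h x = f x"
    proof (cases "x \<in> X")
      case True then show ?thesis using \<sigma>(2) \<rho>_eq unfolding compose_def by auto
    next
      case False then show ?thesis using Tf unfolding compose_def T_map_def by (auto simp: PiE_def extensional_def)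
    qed
  qed
  moreover have "\<sigma> \<in> sgen X Gen" using \<sigma>(1) SG by (auto intro: sgen.gen)
  ultimately show ?thesis using sgen.comp[OF _ h(1)] by metis
qed

definition sw :: "'a set \<Rightarrow> 'a set \<Rightarrow> 'a set \<Rightarrow> 'a set" where
  "sw A B R = (if R = A then B else if R = B then A else R)"

lemma sw_bij: assumes "A \<in> P" "B \<in> P" shows "bij_betw (sw A B) P P"
proof -
  have inv: "sw A B (sw A B R) = R" for R unfolding sw_def by auto
  have "sw A B ` P \<subseteq> P" using assms unfolding sw_def by auto
  moreover have "P \<subseteq> sw A B ` P" using inv \<open>sw A B ` P \<subseteq> P\<close> by (metis image_eqI subsetD subsetI)
  moreover have "inj_on (sw A B) P" by (metis inv inj_onI)
  ultimately show ?thesis unfolding bij_betw_def by auto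
qed

lemma sw_card: "card A = card B \<Longrightarrow> card (sw A B R) = card R"
  unfolding sw_def by auto

definition swapmap :: "'a set \<Rightarrow> 'a set \<Rightarrow> ('a \<Rightarrow> 'a) \<Rightarrow> ('a \<Rightarrow> 'a) \<Rightarrow> 'a \<Rightarrow> 'a" where
  "swapmap D E \<alpha> \<beta> = restrict (\<lambda>z. if z \<in> D then \<alpha> z else if z \<in> E then \<beta> z else z) X"

lemma swap_sig:
  assumes "D \<in> P" "E \<in> P" "D \<noteq> E" "\<alpha> ` D \<subseteq> E" "\<beta> ` E = D"
  shows "swapmap D E \<alpha> \<beta> \<in> Sigma_map X P"
proof -
  have DE: "D \<inter> E = {}" using assms disj by blast
  let ?f = "swapmap D E \<alpha> \<beta>"
  have val: "z \<in> X \<Longrightarrow> ?f z = (if z \<in> D then \<alpha> z else if z \<in> E then \<beta> z else z)" for z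
    unfolding swapmap_def by simp
  have X: "?f \<in> X \<rightarrow>\<^sub>E X"
  proof -
    have "(if z \<in> D then \<alpha> z else if z \<in> E then \<beta> z else z) \<in> X" if z: "z \<in> X" for z
    proof -
      have "z \<in> D \<Longrightarrow> \<alpha> z \<in> X" using assms(4) subX[OF assms(2)] by auto
      moreover have "z \<in> E \<Longrightarrow> \<beta> z \<in> X" using assms(5) subX[OF assms(1)] by auto
      ultimately show ?thesis using z by auto
    qed
    then show ?thesis unfolding swapmap_def by (simp add: restrict_PiE_iff)
  qed
  have T: "\<exists>C\<in>P. ?f ` Q \<subseteq> C" if Q: "Q \<in> P" for Q
  proof -
    have QX: "Q \<subseteq> X" using subX Q by auto
    consider "Q = D" | "Q = E" | "Q \<noteq> D" "Q \<noteq> E" by blast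
    then show ?thesis
    proof cases
      case 1
      have "?f z \<in> E" if z: "z \<in> D" for z
      proof -
        have "z \<in> X" using z 1 QX by auto
        then have "?f z = \<alpha> z" using val z by simp
        then show ?thesis using z assms(4) by auto
      qed
      then show ?thesis using 1 assms(2) by blast
    next
      case 2
      have "?f z \<in> D" if z: "z \<in> E" for z
      proof -
        have "z \<notin> D" using DE z by auto
        then have "?f z = \<beta> z" using z QX 2 val by auto
        then show ?thesis using z assms(5) by auto
      qed
      then show ?thesis using 2 assms(1) by blast
    next
      case 3
      have "Q \<inter> D = {}" "Q \<inter> E = {}" using 3 disj Q assms by blast+
      have "?f z \<in> Q" if z: "z \<in> Q" for z
      proof -
        have "z \<in> X" "z \<notin> D" "z \<notin> E" using z QX \<open>Q \<inter> D = {}\<close> \<open>Q \<inter> E = {}\<close> by auto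
        then have "?f z = z" using val by simp
        then show ?thesis using z by simp
      qed
      then show ?thesis using Q by blast
    qed
  qed
  have H: "?f ` X \<inter> C \<noteq> {}" if C: "C \<in> P" for C
  proof -
    consider "C = D" | "C = E" | "C \<noteq> D" "C \<noteq> E" by blast
    then show ?thesis
    proof cases
      case 1
      obtain e where e: "e \<in> E" using nonemptyB assms(2) by blast
      have eX: "e \<in> X" using e subX[OF assms(2)] by auto
      have "e \<notin> D" using DE e by auto
      then have "?f e = \<beta> e" using val eX e by simp
      moreover have "\<beta> e \<in> D" using assms(5) e by blast
      ultimately have "?f e \<in> C" using 1 by simp
      moreover have "?f e \<in> ?f ` X" using eX by simp
      ultimately show ?thesis by blast
    next
      case 2
      obtain d where d: "d \<in> D" using nonemptyB assms(1) by blast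
      have dX: "d \<in> X" using d subX[OF assms(1)] by auto
      have "?f d = \<alpha> d" using val dX d by simp
      moreover have "\<alpha> d \<in> E" using assms(4) d by blast
      ultimately have "?f d \<in> C" using 2 by simp
      moreover have "?f d \<in> ?f ` X" using dX by simp
      ultimately show ?thesis by blast
    next
      case 3
      obtain q where q: "q \<in> C" using nonemptyB C by blast
      have "q \<notin> D" "q \<notin> E" using 3 disj C assms q by blast+
      moreover have qX: "q \<in> X" using q subX[OF C] by auto
      ultimately have "?f q = q" using val by simp
      then show ?thesis using q qX by force
    qed
  qed
  show ?thesis using X T H unfolding Sigma_map_def T_map_def by auto
qed

definition coll :: "'a \<Rightarrow> 'a \<Rightarrow> 'a \<Rightarrow> 'a" where
  "coll x y = restrict (\<lambda>w. if w = y then x else w) X"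

lemma coll_sig: assumes "B \<in> P" "x \<in> B" "y \<in> B" "x \<noteq> y" shows "coll x y \<in> Sigma_map X P"
proof -
  have xX: "x \<in> X" using assms subX by auto
  have val: "z \<in> X \<Longrightarrow> coll x y z = (if z = y then x else z)" for z unfolding coll_def by simp
  have X: "coll x y \<in> X \<rightarrow>\<^sub>E X" unfolding coll_def using xX by (simp add: restrict_PiE_iff)
  have T: "coll x y ` Q \<subseteq> Q" if Q: "Q \<in> P" for Q
  proof
    fix w assume "w \<in> coll x y ` Q"
    then obtain z where z: "z \<in> Q" "w = coll x y z" by auto
    have zX: "z \<in> X" using z subX Q by auto
    show "w \<in> Q"
    proof (cases "z = y")
      case True
      then have "Q = B" using disj[OF Q assms(1)] assms(3) z(1) by blast
      moreover have "w = x" using True z(2) val zX by simp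
      ultimately show ?thesis using assms(2) by simp
    next
      case False
      then have "w = z" using z(2) val zX by simp
      then show ?thesis using z(1) by simp
    qed
  qed
  have H: "coll x y ` X \<inter> C \<noteq> {}" if C: "C \<in> P" for C
  proof (cases "C = B")
    case True
    have "coll x y x = x" using val xX assms(4) by simp
    then have "x \<in> coll x y ` X" using xX by (metis imageI)
    then show ?thesis using True assms(2) by blast
  next
    case False
    obtain q where q: "q \<in> C" using nonemptyB C by blast
    have "q \<noteq> y" using False disj[OF C assms(1)] assms(3) q by blast
    moreover have qX: "q \<in> X" using q subX[OF C] by auto
    ultimately have "coll x y q = q" using val by simp
    then have "q \<in> coll x y ` X" using qX by (metis imageI)
    then show ?thesis using q by blast
  qed
  have "coll x y \<in> T_map X P" unfolding T_map_def using X T by blast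
  then show ?thesis unfolding Sigma_map_def using H by simp
qed

lemma pair_from_card:
  assumes "finite S" "card (f ` S) < card S"
  shows "\<exists>p\<in>S. \<exists>p'\<in>S. p \<noteq> p' \<and> f p = f p'"
proof (rule ccontr)
  assume "\<not> ?thesis"
  then have "inj_on f S" unfolding inj_on_def by blast
  then show False using assms card_image by fastforce
qed

lemma inj_rest:
  assumes "finite S" "card (f ` S) = card S - 1" "p \<in> S" "p' \<in> S" "p \<noteq> p'" "f p = f p'"
  shows "inj_on f (S - {p})"
proof -
  have "f ` (S - {p}) = f ` S" using assms by auto
  then have "card (f ` (S - {p})) = card (S - {p})" using assms by auto
  then show ?thesis using eq_card_imp_inj_on assms by blast
qed

definition Lz where "Lz = sorted_list_of_set (card ` P)"

lemma Lz: "set Lz = card ` P" "sorted_wrt (<) Lz" "length Lz = num_sizes P"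
  "lsize P i = Lz ! (i - 1)"
  unfolding Lz_def num_sizes_def lsize_def using finP
  by (auto simp: strict_sorted_list_of_set)

lemma Lz_idx: "s \<in> card ` P \<Longrightarrow> \<exists>j<length Lz. Lz ! j = s"
  using Lz(1) by (metis in_set_conv_nth)

lemma Lz_mono: "j < j' \<Longrightarrow> j' < length Lz \<Longrightarrow> Lz ! j < Lz ! j'"
  using Lz(2) sorted_wrt_nth_less by blast

lemma Lz_in: "j < length Lz \<Longrightarrow> Lz ! j \<in> card ` P"
  using Lz(1) nth_mem by metis

lemma consec:
  assumes "D \<in> P" "E \<in> P" "card D < card E" "\<forall>Z\<in>P. \<not> (card D < card Z \<and> card Z < card E)"
  shows "\<exists>i. 1 \<le> i \<and> i \<le> num_sizes P - 1 \<and> lsize P i = card D \<and> lsize P (i+1) = card E"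
proof -
  obtain j where j: "j < length Lz" "Lz ! j = card D" using Lz_idx assms by auto
  obtain j' where j': "j' < length Lz" "Lz ! j' = card E" using Lz_idx assms by auto
  have "j < j'" using Lz_mono j j' assms(3) by (metis less_asym linorder_neqE_nat)
  have "j' = j + 1"
  proof (rule ccontr)
    assume "j' \<noteq> j + 1"
    then have "j + 1 < j'" using \<open>j < j'\<close> by auto
    then have "Lz ! j < Lz ! (j+1)" "Lz ! (j+1) < Lz ! j'" using Lz_mono[of j "j+1"] Lz_mono[of "j+1" j'] j' by auto
    moreover have "Lz ! (j+1) \<in> card ` P" using Lz_in[of "j+1"] \<open>j + 1 < j'\<close> j'(1) by auto
    then obtain Z where "Z \<in> P" "card Z = Lz ! (j+1)" by auto
    ultimately show False using assms(4) j j' by auto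
  qed
  then show ?thesis using j j' Lz(3,4) by (intro exI[of _ "j+1"]) auto
qed

definition Cidx where "Cidx = {i. 1 \<le> i \<and> i \<le> num_sizes P \<and>
               ((i = 1 \<and> lsize P 1 \<ge> 2) \<or> (i \<ge> 2 \<and> lsize P i - lsize P (i - 1) \<ge> 2))}"

lemma cidx:
  assumes "B \<in> P" "card B \<ge> 2" "\<forall>Z\<in>P. card Z \<noteq> card B - 1"
  shows "\<exists>i\<in>Cidx. lsize P i = card B"
proof -
  obtain j where j: "j < length Lz" "Lz ! j = card B" using Lz_idx assms by auto
  show ?thesis
  proof (cases j)
    case 0 then show ?thesis using j assms Lz(3,4) unfolding Cidx_def by (intro bexI[of _ 1]) auto
  next
    case (Suc j0)
    have lt: "Lz ! j0 < card B" using Lz_mono[of j0 j] j Suc by auto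
    obtain Z where "Z \<in> P" "card Z = Lz ! j0" using Lz_in[of j0] j Suc by force
    then have "Lz ! j0 \<noteq> card B - 1" using assms by auto
    then have "card B - Lz ! j0 \<ge> 2" using lt by auto
    then show ?thesis using j Suc Lz(3,4) unfolding Cidx_def by (intro bexI[of _ "j+1"]) auto
  qed
qed

end

locale gens = part X P for X :: "'a set" and P +
  fixes b c :: "nat \<Rightarrow> 'a \<Rightarrow> 'a" and U :: "('a \<Rightarrow> 'a) set"
  assumes bB: "\<And>i. 1 \<le> i \<Longrightarrow> i \<le> num_sizes P - 1 \<Longrightarrow> b i \<in> B_set X P i"
    and cC0: "\<And>i. i \<in> {i. 1 \<le> i \<and> i \<le> num_sizes P \<and>
               ((i = 1 \<and> lsize P 1 \<ge> 2) \<or> (i \<ge> 2 \<and> lsize P i - lsize P (i - 1) \<ge> 2))}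
             \<Longrightarrow> c i \<in> C_set X P i"
    and Ueq0: "U = b ` {1..num_sizes P - 1} \<union>
             c ` {i. 1 \<le> i \<and> i \<le> num_sizes P \<and>
               ((i = 1 \<and> lsize P 1 \<ge> 2) \<or> (i \<ge> 2 \<and> lsize P i - lsize P (i - 1) \<ge> 2))}"
begin

abbreviation "G \<equiv> sgen X (S_map X P \<union> U)"

lemma cC: "i \<in> Cidx \<Longrightarrow> c i \<in> C_set X P i" using cC0 unfolding Cidx_def by blast
lemma Ueq: "U = b ` {1..num_sizes P - 1} \<union> c ` Cidx" using Ueq0 unfolding Cidx_def by blast

lemma G_sig: "f \<in> G \<Longrightarrow> f \<in> Sigma_map X P"
proof (induction rule: sgen.induct)
  case (gen g)
  then show ?case
  proof
    assume "g \<in> S_map X P" then show ?thesis using S_sig by blast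
  next
    assume "g \<in> U"
    then show ?thesis unfolding Ueq using bB cC unfolding B_set_def C_set_def by auto
  qed
next
  case (comp f g) then show ?case using sig_compose by blast
qed

lemma G_comp: "f \<in> G \<Longrightarrow> g \<in> G \<Longrightarrow> compose X f g \<in> G" by (rule sgen.comp)
lemma S_G: "s \<in> S_map X P \<Longrightarrow> s \<in> G" by (simp add: sgen.gen)
lemma b_G: "1 \<le> i \<Longrightarrow> i \<le> num_sizes P - 1 \<Longrightarrow> b i \<in> G" using Ueq by (auto intro: sgen.gen)
lemma c_G: "i \<in> Cidx \<Longrightarrow> c i \<in> G" using Ueq by (auto intro: sgen.gen)

lemma swap_core:
  assumes i: "1 \<le> i" "i \<le> num_sizes P - 1"
    and DE: "D \<in> P" "E \<in> P" "card D = lsize P i" "card E = lsize P (i+1)" "card D < card E"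
    and \<alpha>: "inj_on \<alpha> D" "\<alpha> ` D \<subseteq> E"
  shows "\<exists>\<beta>. \<beta> ` E = D \<and> swapmap D E \<alpha> \<beta> \<in> G"
proof -
  define bb where "bb = b i"
  have "bb \<in> B_set X P i" using bB i unfolding bb_def .
  then obtain Pj Pj' Pk Pk' where Ps: "Pj \<in> P" "Pj' \<in> P" "Pk \<in> P" "Pk' \<in> P"
    and cards: "card Pj = lsize P i" "card Pj' = lsize P i" "card Pk = lsize P (i+1)" "card Pk' = lsize P (i+1)"
    and bj: "inj_on bb Pj" "bb ` Pj \<subseteq> Pk" "bb ` Pk' = Pj'"
    and oth: "\<forall>Q\<in>P - {Pj, Pk'}. \<exists>R\<in>P. card R = card Q \<and> bij_betw bb Q R"
    and bS: "bb \<in> Sigma_map X P"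
    unfolding B_set_def by blast
  have bG: "bb \<in> G" using b_G i unfolding bb_def .
  have ne: "Pj \<noteq> E" "Pj \<noteq> Pk'" "D \<noteq> E" "D \<noteq> Pk'" using cards DE by auto
  define \<psi> where "\<psi> = sw E Pk' \<circ> sw D Pj"
  have \<psi>bij: "bij_betw \<psi> P P" unfolding \<psi>_def using sw_bij bij_betw_trans Ps DE by blast
  have \<psi>card: "\<forall>R\<in>P. card (\<psi> R) = card R" unfolding \<psi>_def using sw_card cards DE by simp
  have \<psi>D: "\<psi> D = Pj" and \<psi>E: "\<psi> E = Pk'" unfolding \<psi>_def sw_def using ne by auto
  obtain \<tau> where \<tau>: "\<tau> \<in> S_map X P" "\<forall>R\<in>P. \<tau> ` R = \<psi> R" using UC[OF \<psi>bij \<psi>card, of "{}"] by auto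
  have \<tau>inj: "inj_on \<tau> X" using S_props \<tau>(1) by auto
  have \<tau>D: "\<tau> ` D = Pj" and \<tau>E: "\<tau> ` E = Pk'" using \<tau>(2) DE \<psi>D \<psi>E by auto
  define h where "h = compose X bb \<tau>"
  have hG: "h \<in> G" unfolding h_def using G_comp bG S_G \<tau>(1) by blast
  have hS: "h \<in> Sigma_map X P" unfolding h_def using sig_compose bS S_sig \<tau>(1) by blast
  have hv: "z \<in> X \<Longrightarrow> h z = bb (\<tau> z)" for z unfolding h_def compose_def by simp
  obtain \<pi> where \<pi>: "bij_betw \<pi> Pj' D" using finite_same_card_bij finB Ps DE cards by metis
  define \<beta> where "\<beta> z = \<pi> (bb (\<tau> z))" for z
  have \<beta>E: "\<beta> ` E = D"
  proof -
    have "\<beta> ` E = \<pi> ` bb ` \<tau> ` E" unfolding \<beta>_def by (simp add: image_comp)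
    then show ?thesis using \<tau>E bj(3) \<pi> unfolding bij_betw_def by simp
  qed
  define f where "f = swapmap D E \<alpha> \<beta>"
  have fS: "f \<in> Sigma_map X P" unfolding f_def using swap_sig[OF DE(1,2) ne(3) \<alpha>(2) \<beta>E] .
  have fv: "z \<in> X \<Longrightarrow> f z = (if z \<in> D then \<alpha> z else if z \<in> E then \<beta> z else z)" for z
    unfolding f_def swapmap_def by simp
  have DEd: "D \<inter> E = {}" using disj DE ne by blast
  have memQ: "z \<in> Q" if "z \<in> X" "blk z = Q" for z Q using blk that by blast
  have K: "\<forall>z1\<in>X. \<forall>z2\<in>X. blk z1 = blk z2 \<longrightarrow> (h z1 = h z2 \<longleftrightarrow> f z1 = f z2)"
  proof (intro ballI impI)
    fix z1 z2 assume z: "z1 \<in> X" "z2 \<in> X" "blk z1 = blk z2"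
    define Q where "Q = blk z1"
    have Q: "Q \<in> P" "z1 \<in> Q" "z2 \<in> Q" using blk z unfolding Q_def by auto
    consider "Q = D" | "Q = E" | "Q \<noteq> D" "Q \<noteq> E" by blast
    then show "h z1 = h z2 \<longleftrightarrow> f z1 = f z2"
    proof cases
      case 1
      have t: "\<tau> z1 \<in> Pj" "\<tau> z2 \<in> Pj" using \<tau>D Q 1 by auto
      have "h z1 = h z2 \<longleftrightarrow> z1 = z2"
        using hv z bj(1) \<tau>inj t unfolding inj_on_def by metis
      moreover have "f z1 = \<alpha> z1" "f z2 = \<alpha> z2" using fv z Q 1 by auto
      moreover have "\<alpha> z1 = \<alpha> z2 \<longleftrightarrow> z1 = z2" using \<alpha>(1) Q 1 unfolding inj_on_def by metis
      ultimately show ?thesis by simp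
    next
      case 2
      have t: "\<tau> z1 \<in> Pk'" "\<tau> z2 \<in> Pk'" using \<tau>E Q 2 by auto
      then have hP: "h z1 \<in> Pj'" "h z2 \<in> Pj'" using hv z bj(3) by auto
      have "z1 \<notin> D" "z2 \<notin> D" using DEd Q 2 by auto
      then have "f z1 = \<pi> (h z1)" "f z2 = \<pi> (h z2)" using fv z Q 2 hv unfolding \<beta>_def by auto
      then show ?thesis using \<pi> hP unfolding bij_betw_def inj_on_def by metis
    next
      case 3
      have tQ: "\<tau> ` Q = \<psi> Q" using \<tau>(2) Q by auto
      have "\<psi> Q \<noteq> Pj" "\<psi> Q \<noteq> Pk'" using \<psi>bij Q 3 DE \<psi>D \<psi>E unfolding bij_betw_def inj_on_def by metis+
      moreover have "\<psi> Q \<in> P" using \<psi>bij Q bij_betwE by blast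
      ultimately obtain R where "R \<in> P" "bij_betw bb (\<psi> Q) R" using oth by blast
      then have ib: "inj_on bb (\<psi> Q)" unfolding bij_betw_def by simp
      have t: "\<tau> z1 \<in> \<psi> Q" "\<tau> z2 \<in> \<psi> Q" using tQ Q by auto
      have "h z1 = h z2 \<longleftrightarrow> z1 = z2" using hv z ib \<tau>inj t unfolding inj_on_def by metis
      moreover have "z1 \<notin> D" "z1 \<notin> E" "z2 \<notin> D" "z2 \<notin> E"
        using 3 blk_eq DE Q z unfolding Q_def by metis+
      then have "f z1 = z1" "f z2 = z2" using fv z by auto
      ultimately show ?thesis by simp
    qed
  qed
  have Sz: "\<forall>z\<in>X. card (blk (h z)) = card (blk (f z))"
  proof
    fix z assume z: "z \<in> X"
    define Q where "Q = blk z"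
    have Q: "Q \<in> P" "z \<in> Q" using blk z unfolding Q_def by auto
    consider "Q = D" | "Q = E" | "Q \<noteq> D" "Q \<noteq> E" by blast
    then show "card (blk (h z)) = card (blk (f z))"
    proof cases
      case 1
      have "h z \<in> Pk" using hv z \<tau>D Q 1 bj(2) by auto
      then have "blk (h z) = Pk" using blk_eq Ps by auto
      moreover have "f z \<in> E" using fv z Q 1 \<alpha>(2) by auto
      then have "blk (f z) = E" using blk_eq DE by auto
      ultimately show ?thesis using cards DE by simp
    next
      case 2
      have "h z \<in> Pj'" using hv z \<tau>E Q 2 bj(3) by auto
      then have "blk (h z) = Pj'" using blk_eq Ps by auto
      moreover have "z \<notin> D" using DEd Q 2 by auto
      then have "f z = \<beta> z" using fv z Q 2 by auto
      then have "f z \<in> D" using \<beta>E Q 2 by auto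
      then have "blk (f z) = D" using blk_eq DE by auto
      ultimately show ?thesis using cards DE by simp
    next
      case 3
      have "\<psi> Q \<noteq> Pj" "\<psi> Q \<noteq> Pk'" using \<psi>bij Q 3 DE \<psi>D \<psi>E unfolding bij_betw_def inj_on_def by metis+
      moreover have \<psi>Q: "\<psi> Q \<in> P" using \<psi>bij Q bij_betwE by blast
      ultimately obtain R where R: "R \<in> P" "card R = card (\<psi> Q)" "bij_betw bb (\<psi> Q) R" using oth by blast
      have "\<tau> z \<in> \<psi> Q" using \<tau>(2) Q by auto
      then have "h z \<in> R" using hv z R(3) unfolding bij_betw_def by auto
      then have "blk (h z) = R" using blk_eq R by auto
      moreover have "z \<notin> D" "z \<notin> E" using 3 blk_eq DE Q z unfolding Q_def by metis+
      then have "f z = z" using fv z by auto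
      then have "blk (f z) = Q" using Q_def by simp
      ultimately show ?thesis using R \<psi>card Q by simp
    qed
  qed
  have "f \<in> G" using TL[OF _ hG hS fS K Sz] by blast
  then show ?thesis using \<beta>E unfolding f_def by blast
qed


lemma swap_consec:
  assumes "D \<in> P" "E \<in> P" "card D < card E" "\<forall>Z\<in>P. \<not> (card D < card Z \<and> card Z < card E)"
    "inj_on \<alpha> D" "\<alpha> ` D \<subseteq> E"
  shows "\<exists>\<beta>. \<beta> ` E = D \<and> swapmap D E \<alpha> \<beta> \<in> G"
proof -
  obtain i where "1 \<le> i" "i \<le> num_sizes P - 1" "lsize P i = card D" "lsize P (i+1) = card E"
    using consec[OF assms(1-4)] by blast
  then show ?thesis using swap_core[of i D E \<alpha>] assms by auto
qed

lemma TLpair: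
  assumes k: "k \<in> G" "\<forall>z\<in>X. card (blk (k z)) = card (blk z)"
    and uv: "u \<in> X" "v \<in> X" "u \<noteq> v" "k u = k v" "inj_on k (X - {v})"
    and B: "B \<in> P" "x \<in> B" "y \<in> B" "x \<noteq> y" "card B = card (blk u)"
  shows "coll x y \<in> G"
proof -
  have kS: "k \<in> Sigma_map X P" using G_sig k(1) .
  define B0 where "B0 = blk u"
  have B0: "B0 \<in> P" "u \<in> B0" using blk uv unfolding B0_def by auto
  have "blk v = B0" using sig_blk[OF kS uv(2) uv(1)] uv(4) unfolding B0_def by simp
  then have vB0: "v \<in> B0" using blk(2)[OF uv(2)] by simp
  define \<psi> where "\<psi> = sw B B0"
  have \<psi>bij: "bij_betw \<psi> P P" unfolding \<psi>_def using sw_bij B B0 by blast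
  have \<psi>card: "\<forall>R\<in>P. card (\<psi> R) = card R" unfolding \<psi>_def using sw_card B(5) unfolding B0_def by simp
  have \<psi>B: "\<psi> B = B0" unfolding \<psi>_def sw_def by simp
  define \<rho> where "\<rho> w = (if w = x then u else v)" for w
  have bx: "blk x = B" "blk y = B" using blk_eq B by auto
  have A1: "{x,y} \<subseteq> X" using B subX by auto
  have A2: "inj_on \<rho> {x,y}" unfolding \<rho>_def using B(4) uv(3) by (auto simp: inj_on_def)
  have A3: "\<forall>a\<in>{x,y}. \<rho> a \<in> \<psi> (blk a)" unfolding \<rho>_def using bx \<psi>B B0 vB0 by auto
  obtain \<tau> where \<tau>: "\<tau> \<in> S_map X P" "\<forall>a\<in>{x,y}. \<tau> a = \<rho> a" "\<forall>R\<in>P. \<tau> ` R = \<psi> R"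
    using UC[OF \<psi>bij \<psi>card A1 A2 A3] by blast
  have \<tau>x: "\<tau> x = u" and \<tau>y: "\<tau> y = v" using \<tau>(2) B(4) unfolding \<rho>_def by auto
  have \<tau>inj: "inj_on \<tau> X" using S_props \<tau>(1) by auto
  have \<tau>X: "z \<in> X \<Longrightarrow> \<tau> z \<in> X" for z using S_props(1)[OF \<tau>(1)] T_into by blast
  define h where "h = compose X k \<tau>"
  have hG: "h \<in> G" unfolding h_def using G_comp k(1) S_G \<tau>(1) by blast
  have hS: "h \<in> Sigma_map X P" unfolding h_def using sig_compose kS S_sig \<tau>(1) by blast
  have hv: "z \<in> X \<Longrightarrow> h z = k (\<tau> z)" for z unfolding h_def compose_def by simp
  define f where "f = coll x y"
  have fS: "f \<in> Sigma_map X P" unfolding f_def using coll_sig B by blast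
  have fv: "z \<in> X \<Longrightarrow> f z = (if z = y then x else z)" for z unfolding f_def coll_def by simp
  have xX: "x \<in> X" and yX: "y \<in> X" using A1 by auto
  have key: "k (\<tau> z1) = k (\<tau> z2) \<longleftrightarrow> (z1 = z2 \<or> (z1 = x \<and> z2 = y) \<or> (z1 = y \<and> z2 = x))"
    if z: "z1 \<in> X" "z2 \<in> X" for z1 z2
  proof
    assume e: "k (\<tau> z1) = k (\<tau> z2)"
    have c1: "\<tau> z = v \<Longrightarrow> z = y" if "z \<in> X" for z using \<tau>inj \<tau>y that yX unfolding inj_on_def by metis
    have c2: "\<tau> z = u \<Longrightarrow> z = x" if "z \<in> X" for z using \<tau>inj \<tau>x that xX unfolding inj_on_def by metis
    have inj2: "\<lbrakk>a \<in> X; b \<in> X; a \<noteq> v; b \<noteq> v; k a = k b\<rbrakk> \<Longrightarrow> a = b" for a b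
      using uv(5) unfolding inj_on_def by blast
    show "z1 = z2 \<or> (z1 = x \<and> z2 = y) \<or> (z1 = y \<and> z2 = x)"
    proof (cases "\<tau> z1 = v")
      case True
      then have "z1 = y" using c1 z by auto
      show ?thesis
      proof (cases "\<tau> z2 = v")
        case True then show ?thesis using c1 z \<open>z1 = y\<close> by auto
      next
        case False
        have "k (\<tau> z2) = k u" using e True uv(4) by simp
        then have "\<tau> z2 = u" using inj2[of "\<tau> z2" u] False uv \<tau>X z by auto
        then show ?thesis using c2 z \<open>z1 = y\<close> by auto
      qed
    next
      case False
      show ?thesis
      proof (cases "\<tau> z2 = v")
        case True
        then have "z2 = y" using c1 z by auto
        have "k (\<tau> z1) = k u" using e True uv(4) by simp
        then have "\<tau> z1 = u" using inj2[of "\<tau> z1" u] False uv \<tau>X z by auto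
        then show ?thesis using c2 z \<open>z2 = y\<close> by auto
      next
        case False2: False
        then have "\<tau> z1 = \<tau> z2" using inj2 False e \<tau>X z by blast
        then show ?thesis using \<tau>inj z unfolding inj_on_def by blast
      qed
    qed
  next
    assume "z1 = z2 \<or> (z1 = x \<and> z2 = y) \<or> (z1 = y \<and> z2 = x)"
    then show "k (\<tau> z1) = k (\<tau> z2)" using \<tau>x \<tau>y uv(4) by auto
  qed
  have K: "\<forall>z1\<in>X. \<forall>z2\<in>X. blk z1 = blk z2 \<longrightarrow> (h z1 = h z2 \<longleftrightarrow> f z1 = f z2)"
  proof (intro ballI impI)
    fix z1 z2 assume z: "z1 \<in> X" "z2 \<in> X" "blk z1 = blk z2"
    have "f z1 = f z2 \<longleftrightarrow> (z1 = z2 \<or> (z1 = x \<and> z2 = y) \<or> (z1 = y \<and> z2 = x))"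
      using fv z B(4) by auto
    then show "h z1 = h z2 \<longleftrightarrow> f z1 = f z2" using key z hv by simp
  qed
  have Sz: "\<forall>z\<in>X. card (blk (h z)) = card (blk (f z))"
  proof
    fix z assume z: "z \<in> X"
    have "\<tau> z \<in> \<psi> (blk z)" using \<tau>(3) blk[OF z] by blast
    moreover have "\<psi> (blk z) \<in> P" using \<psi>bij blk(1)[OF z] bij_betwE by blast
    ultimately have "blk (\<tau> z) = \<psi> (blk z)" using blk_eq by blast
    then have "card (blk (h z)) = card (blk z)" using hv z k(2) \<tau>X \<psi>card blk(1)[OF z] by simp
    moreover have "f z \<in> blk z" using fv z bx blk(2)[OF xX] blk(2)[OF z] by auto
    then have "blk (f z) = blk z" using blk_eq blk(1)[OF z] by blast
    ultimately show "card (blk (h z)) = card (blk (f z))" by simp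
  qed
  show ?thesis using TL[OF _ hG hS fS K Sz] unfolding f_def by blast
qed


lemma coll_G:
  assumes B: "B \<in> P" "x \<in> B" "y \<in> B" "x \<noteq> y"
  shows "coll x y \<in> G"
proof -
  have finBB: "finite B" using finB B by auto
  have cB: "card B \<ge> 2"
  proof -
    have "card {x,y} \<le> card B" using B finBB by (intro card_mono) auto
    then show ?thesis using B(4) by simp
  qed
  show ?thesis
  proof (cases "\<exists>Dm\<in>P. card Dm = card B - 1")
    case True
    then obtain Dm where Dm: "Dm \<in> P" "card Dm = card B - 1" by blast
    have finD: "finite Dm" using finB Dm by auto
    have lt: "card Dm < card B" using Dm cB by simp
    have DmB: "Dm \<noteq> B" using lt by auto
    have DBd: "Dm \<inter> B = {}" using disj Dm B DmB by blast
    have nb: "\<forall>Z\<in>P. \<not> (card Dm < card Z \<and> card Z < card B)" using Dm by auto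
    obtain T where T: "T \<subseteq> B" "card T = card Dm" using obtain_subset_with_card_n lt by (metis less_imp_le)
    obtain \<alpha>2 where \<alpha>2: "bij_betw \<alpha>2 Dm T" using finite_same_card_bij finD finBB T finite_subset by metis
    have \<alpha>2': "inj_on \<alpha>2 Dm" "\<alpha>2 ` Dm \<subseteq> B" using \<alpha>2 T unfolding bij_betw_def by auto
    obtain \<beta>2 where \<beta>2: "\<beta>2 ` B = Dm" "swapmap Dm B \<alpha>2 \<beta>2 \<in> G"
      using swap_consec[OF Dm(1) B(1) lt nb \<alpha>2'] by blast
    obtain p p' where pp: "p \<in> B" "p' \<in> B" "p \<noteq> p'" "\<beta>2 p = \<beta>2 p'"
      using pair_from_card[OF finBB, of \<beta>2] \<beta>2(1) lt by metis
    have inj\<beta>2: "inj_on \<beta>2 (B - {p})" using inj_rest[OF finBB _ pp] \<beta>2(1) Dm(2) by simp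
    have "card (B - {p}) = card Dm" using Dm pp finBB by simp
    then obtain \<alpha>1 where \<alpha>1: "bij_betw \<alpha>1 Dm (B - {p})" using finite_same_card_bij finD finBB
      by (metis finite_Diff)
    have \<alpha>1': "inj_on \<alpha>1 Dm" "\<alpha>1 ` Dm \<subseteq> B" using \<alpha>1 unfolding bij_betw_def by auto
    obtain \<beta>1 where \<beta>1: "\<beta>1 ` B = Dm" "swapmap Dm B \<alpha>1 \<beta>1 \<in> G"
      using swap_consec[OF Dm(1) B(1) lt nb \<alpha>1'] by blast
    obtain v u where vu: "v \<in> B" "u \<in> B" "v \<noteq> u" "\<beta>1 v = \<beta>1 u"
      using pair_from_card[OF finBB, of \<beta>1] \<beta>1(1) lt by metis
    have inj\<beta>1: "inj_on \<beta>1 (B - {v})" using inj_rest[OF finBB _ vu] \<beta>1(1) Dm(2) by simp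
    define t1 where "t1 = swapmap Dm B \<alpha>1 \<beta>1"
    define t2 where "t2 = swapmap Dm B \<alpha>2 \<beta>2"
    define k where "k = compose X t2 t1"
    have kG: "k \<in> G" unfolding k_def t1_def t2_def using G_comp \<beta>1 \<beta>2 by blast
    have DmX: "Dm \<subseteq> X" and BX: "B \<subseteq> X" using subX Dm B by auto
    have t1v: "z \<in> X \<Longrightarrow> t1 z = (if z \<in> Dm then \<alpha>1 z else if z \<in> B then \<beta>1 z else z)" for z
      unfolding t1_def swapmap_def by simp
    have t2v: "z \<in> X \<Longrightarrow> t2 z = (if z \<in> Dm then \<alpha>2 z else if z \<in> B then \<beta>2 z else z)" for z
      unfolding t2_def swapmap_def by simp
    have k1: "k z = \<beta>2 (\<alpha>1 z)" if z: "z \<in> Dm" for z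
    proof -
      have "\<alpha>1 z \<in> B - {p}" using \<alpha>1 z bij_betwE by blast
      then have "\<alpha>1 z \<in> X" "\<alpha>1 z \<notin> Dm" "\<alpha>1 z \<in> B" using BX DBd by auto
      then show ?thesis unfolding k_def compose_def using t1v t2v z DmX by auto
    qed
    have k2: "k z = \<alpha>2 (\<beta>1 z)" if z: "z \<in> B" for z
    proof -
      have "z \<notin> Dm" using z DBd by auto
      moreover have "\<beta>1 z \<in> Dm" using \<beta>1(1) z by blast
      ultimately show ?thesis unfolding k_def compose_def using t1v t2v z DmX BX by auto
    qed
    have k3: "k z = z" if z: "z \<in> X" "z \<notin> Dm" "z \<notin> B" for z
      unfolding k_def compose_def using t1v t2v z by auto
    have kblk: "k z \<in> blk z" if z: "z \<in> X" for z
    proof -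
      consider "z \<in> Dm" | "z \<in> B" | "z \<notin> Dm" "z \<notin> B" by blast
      then show ?thesis
      proof cases
        case 1
        have "\<beta>2 (\<alpha>1 z) \<in> Dm" using \<alpha>1'(2) 1 \<beta>2(1) by blast
        then show ?thesis using k1 1 blk_eq Dm by auto
      next
        case 2
        have "\<alpha>2 (\<beta>1 z) \<in> B" using \<alpha>2'(2) 2 \<beta>1(1) by blast
        then show ?thesis using k2 2 blk_eq B by auto
      qed (use k3 z blk in auto)
    qed
    have kX: "k z \<in> X" if "z \<in> X" for z using kblk that blk subX by blast
    have kbl: "blk (k z) = blk z" if z: "z \<in> X" for z using kblk z blk blk_eq by metis
    have kuv: "k u = k v" using k2 vu by simp
    have uvX: "u \<in> X" "v \<in> X" using vu BX by auto
    have injk: "inj_on k (X - {v})"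
    proof (rule inj_onI)
      fix z1 z2 assume z: "z1 \<in> X - {v}" "z2 \<in> X - {v}" "k z1 = k z2"
      have zX: "z1 \<in> X" "z2 \<in> X" using z by auto
      have eb: "blk z1 = blk z2" using kbl zX z(3) by metis
      consider "z1 \<in> Dm" | "z1 \<in> B" | "z1 \<notin> Dm" "z1 \<notin> B" by blast
      then show "z1 = z2"
      proof cases
        case 1
        then have "z2 \<in> Dm" using eb blk_eq Dm blk(2)[OF zX(2)] by metis
        have "\<alpha>1 z1 \<in> B - {p}" "\<alpha>1 z2 \<in> B - {p}" using \<alpha>1 1 \<open>z2 \<in> Dm\<close> bij_betwE by blast+
        moreover have "\<beta>2 (\<alpha>1 z1) = \<beta>2 (\<alpha>1 z2)" using k1 1 \<open>z2 \<in> Dm\<close> z(3) by simp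
        ultimately have "\<alpha>1 z1 = \<alpha>1 z2" using inj\<beta>2 unfolding inj_on_def by blast
        then show ?thesis using \<alpha>1'(1) 1 \<open>z2 \<in> Dm\<close> unfolding inj_on_def by blast
      next
        case 2
        then have "z2 \<in> B" using eb blk_eq B blk(2)[OF zX(2)] by metis
        have "\<beta>1 z1 \<in> Dm" "\<beta>1 z2 \<in> Dm" using \<beta>1(1) 2 \<open>z2 \<in> B\<close> by blast+
        moreover have "\<alpha>2 (\<beta>1 z1) = \<alpha>2 (\<beta>1 z2)" using k2 2 \<open>z2 \<in> B\<close> z(3) by simp
        ultimately have "\<beta>1 z1 = \<beta>1 z2" using \<alpha>2'(1) unfolding inj_on_def by blast
        then show ?thesis using inj\<beta>1 2 \<open>z2 \<in> B\<close> z unfolding inj_on_def by blast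
      next
        case 3
        have "z2 \<notin> Dm" "z2 \<notin> B" using 3 eb blk_eq Dm B blk(2)[OF zX(1)] blk(2)[OF zX(2)] by metis+
        then show ?thesis using k3 3 zX z(3) by simp
      qed
    qed
    have "blk u = B" using blk_eq B vu by auto
    then show ?thesis using TLpair[OF kG _ uvX vu(3)[symmetric] kuv injk B] kbl by simp
  next
    case False
    then have nb: "\<forall>Z\<in>P. card Z \<noteq> card B - 1" by blast
    obtain i where i: "i \<in> Cidx" "lsize P i = card B" using cidx[OF B(1) cB nb] by blast
    define cc where "cc = c i"
    have ccG: "cc \<in> G" using c_G i unfolding cc_def by blast
    have "cc \<in> C_set X P i" using cC i unfolding cc_def by blast
    then obtain B0 where ccS: "cc \<in> Sigma_map X P"
      and sz: "\<forall>Q\<in>P. \<exists>R\<in>P. card R = card Q \<and> cc ` Q \<subseteq> R"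
      and B0: "B0 \<in> P" "card B0 = lsize P i" "card (cc ` B0) = lsize P i - 1" "\<forall>Q\<in>P - {B0}. inj_on cc Q"
      unfolding C_set_def by blast
    have finB0: "finite B0" using finB B0 by auto
    obtain v u where vu: "v \<in> B0" "u \<in> B0" "v \<noteq> u" "cc v = cc u"
      using pair_from_card[OF finB0, of cc] B0 i cB by (metis diff_less zero_less_one less_le_trans one_le_numeral)
    have injB0: "inj_on cc (B0 - {v})" using inj_rest[OF finB0 _ vu] B0 by simp
    have uvX: "u \<in> X" "v \<in> X" using vu subX B0 by auto
    have injc: "inj_on cc (X - {v})"
    proof (rule inj_onI)
      fix z1 z2 assume z: "z1 \<in> X - {v}" "z2 \<in> X - {v}" "cc z1 = cc z2"
      have zX: "z1 \<in> X" "z2 \<in> X" using z by auto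
      have eb: "blk z1 = blk z2" using sig_blk[OF ccS zX] z(3) by simp
      show "z1 = z2"
      proof (cases "blk z1 = B0")
        case True
        then have "z1 \<in> B0 - {v}" "z2 \<in> B0 - {v}" using eb blk(2) zX z by auto
        then show ?thesis using injB0 z(3) unfolding inj_on_def by blast
      next
        case False
        then have "inj_on cc (blk z1)" using B0(4) blk(1)[OF zX(1)] by blast
        then show ?thesis using blk(2) zX eb z(3) unfolding inj_on_def by metis
      qed
    qed
    have csz: "\<forall>z\<in>X. card (blk (cc z)) = card (blk z)"
    proof
      fix z assume z: "z \<in> X"
      obtain R where R: "R \<in> P" "card R = card (blk z)" "cc ` blk z \<subseteq> R" using sz blk(1)[OF z] by blast
      have "cc z \<in> R" using R(3) blk(2)[OF z] by blast
      then show "card (blk (cc z)) = card (blk z)" using blk_eq R by simp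
    qed
    have "blk u = B0" using blk_eq B0 vu by auto
    then show ?thesis using TLpair[OF ccG csz uvX vu(3)[symmetric] vu(4)[symmetric] injc B] B0 i by simp
  qed
qed


lemma fixb_aux:
  "\<forall>f. f \<in> X \<rightarrow>\<^sub>E X \<and> (\<forall>Q\<in>P. f ` Q \<subseteq> Q) \<and> card X - card (f ` X) = n \<longrightarrow> f \<in> G"
proof (induction n rule: less_induct)
  case (less n)
  show ?case
  proof (intro allI impI, elim conjE)
    fix f assume fX: "f \<in> X \<rightarrow>\<^sub>E X" and fQ: "\<forall>Q\<in>P. f ` Q \<subseteq> Q" and n: "card X - card (f ` X) = n"
    have fimg: "f ` X \<subseteq> X" using fX by auto
    have fb: "f z \<in> blk z" if "z \<in> X" for z using fQ blk[OF that] by blast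
    show "f \<in> G"
    proof (cases "inj_on f X")
      case True
      have "f ` X = X" using endo_inj_surj[OF finX fimg True] .
      then have bij: "bij_betw f X X" using True unfolding bij_betw_def by simp
      have "f ` R \<in> P" if R: "R \<in> P" for R
      proof -
        have "f ` R = R" using endo_inj_surj[OF finB[OF R]] fQ R inj_on_subset[OF True subX[OF R]] by blast
        then show ?thesis using R by simp
      qed
      then have "f \<in> S_map X P" using unit_crit[OF fX bij] by blast
      then show ?thesis using S_G by blast
    next
      case False
      then obtain x y where xy: "x \<in> X" "y \<in> X" "x \<noteq> y" "f x = f y" unfolding inj_on_def by blast
      define Q where "Q = blk x"
      have Q: "Q \<in> P" "x \<in> Q" using blk xy unfolding Q_def by auto
      have "blk y = Q" using fb xy disj blk Q_def by metis
      then have yQ: "y \<in> Q" using blk(2)[OF xy(2)] by simp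
      have finQ: "finite Q" using finB Q by auto
      have "\<not> inj_on f Q" using xy Q yQ unfolding inj_on_def by blast
      then have "card (f ` Q) \<noteq> card Q" using eq_card_imp_inj_on finQ by blast
      moreover have "card (f ` Q) \<le> card Q" using card_image_le finQ by blast
      ultimately have "card (f ` Q) < card Q" by simp
      then have "f ` Q \<noteq> Q" by auto
      then obtain z where z: "z \<in> Q" "z \<notin> f ` Q" using fQ Q by blast
      have zX: "z \<in> X" using z Q subX by auto
      define f2 where "f2 = f(y := z)"
      have f2X: "f2 \<in> X \<rightarrow>\<^sub>E X" using fX zX xy unfolding f2_def by (auto simp: PiE_def extensional_def)
      have f2Q: "\<forall>R\<in>P. f2 ` R \<subseteq> R"
      proof
        fix R assume R: "R \<in> P"
        show "f2 ` R \<subseteq> R"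
        proof
          fix w assume "w \<in> f2 ` R"
          then obtain a where a: "a \<in> R" "w = f2 a" by auto
          show "w \<in> R"
          proof (cases "a = y")
            case True
            then have "R = Q" using disj R Q(1) a yQ by blast
            then show ?thesis using True a z unfolding f2_def by simp
          next
            case False then show ?thesis using a fQ R unfolding f2_def by auto
          qed
        qed
      qed
      have notin: "z \<notin> f ` X"
      proof
        assume "z \<in> f ` X"
        then obtain w where w: "w \<in> X" "z = f w" by auto
        then have "blk w = Q" using fb disj blk z Q by metis
        then show False using w z blk(2)[OF w(1)] by auto
      qed
      have "f2 ` X = insert z (f ` (X - {y}))" using xy unfolding f2_def by auto
      moreover have "f ` (X - {y}) = f ` X" using xy by auto (metis DiffI empty_iff imageI insert_iff)
      ultimately have im: "f2 ` X = insert z (f ` X)" by simp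
      have cim: "card (f2 ` X) = Suc (card (f ` X))" using im notin finX by simp
      have "card (f2 ` X) \<le> card X" using card_image_le finX by blast
      then have "card X - card (f2 ` X) < n" using cim n by simp
      then have f2G: "f2 \<in> G" using less f2X f2Q by blast
      have "compose X f2 (coll x y) = f"
      proof (rule ext)
        fix w show "compose X f2 (coll x y) w = f w"
        proof (cases "w \<in> X")
          case True then show ?thesis unfolding compose_def coll_def f2_def using xy by auto
        next
          case False then show ?thesis using fX unfolding compose_def by (auto simp: PiE_def extensional_def)
        qed
      qed
      moreover have "coll x y \<in> G" using coll_G Q yQ xy by blast
      ultimately show ?thesis using G_comp f2G by metis
    qed
  qed
qed

lemma fixb: "f \<in> X \<rightarrow>\<^sub>E X \<Longrightarrow> \<forall>Q\<in>P. f ` Q \<subseteq> Q \<Longrightarrow> f \<in> G"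
  using fixb_aux by blast

lemma sizepres:
  assumes fS: "f \<in> Sigma_map X P" and cp: "\<forall>Q\<in>P. card (phi f Q) = card Q"
  shows "f \<in> G"
proof -
  have fT: "f \<in> T_map X P" using sig_T fS .
  obtain \<sigma> where \<sigma>: "\<sigma> \<in> S_map X P" "\<forall>R\<in>P. \<sigma> ` R = phi f R"
    using UC[OF phi_bij[OF fS] cp, of "{}"] by auto
  have inj: "inj_on \<sigma> X" and sur: "\<sigma> ` X = X" using S_props \<sigma>(1) by auto
  define f2 where "f2 = restrict (\<lambda>x. inv_into X \<sigma> (f x)) X"
  have fXX: "f x \<in> X" if "x \<in> X" for x using T_into[OF fT that] .
  have f2X: "f2 \<in> X \<rightarrow>\<^sub>E X" unfolding f2_def using fXX sur by (auto simp: restrict_PiE_iff intro: inv_into_into)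
  have f2Q: "\<forall>Q\<in>P. f2 ` Q \<subseteq> Q"
  proof (intro ballI subsetI)
    fix Q w assume Q: "Q \<in> P" and "w \<in> f2 ` Q"
    then obtain x where x: "x \<in> Q" "w = f2 x" by auto
    have xX: "x \<in> X" using x Q subX by auto
    have "f x \<in> \<sigma> ` Q" using phi(3)[OF fT Q x(1)] \<sigma>(2) Q by simp
    then obtain q where q: "q \<in> Q" "f x = \<sigma> q" by auto
    have "q \<in> X" using q Q subX by auto
    then have "inv_into X \<sigma> (f x) = q" using q inv_into_f_f[OF inj] by simp
    then show "w \<in> Q" using x xX q unfolding f2_def by simp
  qed
  have "compose X \<sigma> f2 = f"
  proof (rule ext)
    fix w show "compose X \<sigma> f2 w = f w"
    proof (cases "w \<in> X")
      case True then show ?thesis unfolding compose_def f2_def using fXX sur by (auto simp: f_inv_into_f)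
    next
      case False then show ?thesis using fT unfolding compose_def T_map_def by (auto simp: PiE_def extensional_def)
    qed
  qed
  moreover have "f2 \<in> G" using fixb f2X f2Q by blast
  ultimately show ?thesis using G_comp S_G \<sigma>(1) by metis
qed


definition pot :: "('a \<Rightarrow> 'a) \<Rightarrow> int" where
  "pot f = (\<Sum>Q\<in>P. (int (card (phi f Q)) - int (card Q))^2)"

lemma pot_ineq:
  fixes d e q r :: int
  assumes "d < e" "q < r"
  shows "(d - q)^2 + (e - r)^2 < (e - q)^2 + (d - r)^2"
proof -
  have "(e - q)^2 + (d - r)^2 - ((d - q)^2 + (e - r)^2) = 2 * ((e - d) * (r - q))"
    by (simp add: power2_eq_square algebra_simps)
  moreover have "0 < (e - d) * (r - q)" using assms by simp
  ultimately show ?thesis by linarith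
qed

lemma main_aux: "\<forall>f. f \<in> Sigma_map X P \<and> nat (pot f) = n \<longrightarrow> f \<in> G"
proof (induction n rule: less_induct)
  case (less n)
  show ?case
  proof (intro allI impI, elim conjE)
    fix f assume fS: "f \<in> Sigma_map X P" and n: "nat (pot f) = n"
    have fT: "f \<in> T_map X P" using sig_T fS .
    define \<phi> where "\<phi> = phi f"
    have \<phi>bij: "bij_betw \<phi> P P" using phi_bij fS unfolding \<phi>_def by simp
    have \<phi>P: "Q \<in> P \<Longrightarrow> \<phi> Q \<in> P" for Q using \<phi>bij bij_betwE by blast
    have \<phi>inj: "\<lbrakk>Q1 \<in> P; Q2 \<in> P; \<phi> Q1 = \<phi> Q2\<rbrakk> \<Longrightarrow> Q1 = Q2" for Q1 Q2
      using \<phi>bij unfolding bij_betw_def inj_on_def by blast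
    have fin: "f x \<in> \<phi> (blk x)" "blk (f x) = \<phi> (blk x)" if "x \<in> X" for x
      using phi[OF fT blk(1)[OF that] blk(2)[OF that]] unfolding \<phi>_def by auto
    show "f \<in> G"
    proof (cases "\<forall>Q\<in>P. card (\<phi> Q) = card Q")
      case True then show ?thesis using sizepres fS unfolding \<phi>_def by blast
    next
      case False
      have up: "\<exists>Q\<in>P. card Q < card (\<phi> Q)"
      proof (rule ccontr)
        assume "\<not> ?thesis"
        then have le: "\<forall>Q\<in>P. card (\<phi> Q) \<le> card Q" by auto
        then have "\<exists>Q\<in>P. card (\<phi> Q) < card Q" using False by (meson le_neq_implies_less)
        then have "(\<Sum>Q\<in>P. card (\<phi> Q)) < (\<Sum>Q\<in>P. card Q)" using sum_strict_mono_ex1[OF finP le] by blast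
        moreover have "(\<Sum>Q\<in>P. card (\<phi> Q)) = (\<Sum>Q\<in>P. card Q)" using sum.reindex_bij_betw[OF \<phi>bij] .
        ultimately show False by simp
      qed
      define M where "M = {Q\<in>P. card Q < card (\<phi> Q)}"
      have finM: "finite M" using finP unfolding M_def by simp
      have neM: "M \<noteq> {}" using up unfolding M_def by blast
      define m where "m = Min ((\<lambda>Q. card (\<phi> Q)) ` M)"
      have "m \<in> (\<lambda>Q. card (\<phi> Q)) ` M" unfolding m_def using finM neM by (intro Min_in) auto
      then obtain Q0 where Q0: "Q0 \<in> M" "card (\<phi> Q0) = m" by auto
      have minQ: "\<forall>Q\<in>M. m \<le> card (\<phi> Q)" unfolding m_def using finM by auto
      have Q0P: "Q0 \<in> P" "card Q0 < card (\<phi> Q0)" using Q0 unfolding M_def by auto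
      define E where "E = \<phi> Q0"
      have EP: "E \<in> P" using \<phi>P Q0P unfolding E_def by simp
      define e where "e = card E"
      define L' where "L' = {R\<in>P. card R < e}"
      have finL': "finite (card ` L')" using finP unfolding L'_def by simp
      have Q0L: "Q0 \<in> L'" using Q0P unfolding L'_def e_def E_def by simp
      define d where "d = Max (card ` L')"
      have dge: "\<forall>R\<in>P. card R < e \<longrightarrow> card R \<le> d" unfolding d_def L'_def using finL' L'_def by auto
      have "d \<in> card ` L'" unfolding d_def using Max_in finL' Q0L by blast
      then obtain Dm0 where Dm0: "Dm0 \<in> P" "card Dm0 = d" "d < e" unfolding L'_def by auto
      have qd: "card Q0 \<le> d" using dge Q0P unfolding e_def E_def by simp
      have pre: "d \<le> card R" if R: "R \<in> P" "card (\<phi> R) = d" for R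
      proof (rule ccontr)
        assume "\<not> d \<le> card R"
        then have "R \<in> M" using R unfolding M_def by auto
        then have "m \<le> d" using minQ R by auto
        then show False using Q0 Dm0 unfolding e_def E_def by simp
      qed
      define \<psi> where "\<psi> = inv_into P \<phi>"
      have \<psi>: "\<psi> Z \<in> P" "\<phi> (\<psi> Z) = Z" if "Z \<in> P" for Z
      proof -
        have "Z \<in> \<phi> ` P" using that \<phi>bij unfolding bij_betw_def by simp
        then show "\<psi> Z \<in> P" "\<phi> (\<psi> Z) = Z" unfolding \<psi>_def by (rule inv_into_into, rule f_inv_into_f)
      qed
      obtain Dm where Dm: "Dm \<in> P" "card Dm = d" "card Q0 < card (\<psi> Dm)"
      proof (cases "card Q0 < d")
        case True
        have "d \<le> card (\<psi> Dm0)" using pre[of "\<psi> Dm0"] \<psi>[OF Dm0(1)] Dm0 by simp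
        then show ?thesis using that Dm0 True by simp
      next
        case False
        then have q: "card Q0 = d" using qd by simp
        show ?thesis
        proof (rule ccontr)
          assume "\<not> ?thesis"
          then have nn: "\<forall>Z\<in>P. card Z = d \<longrightarrow> card (\<psi> Z) \<le> d" using that q by force
          define W where "W = {Z\<in>P. card Z = d}"
          have "\<psi> ` W \<subseteq> W"
          proof
            fix Y assume "Y \<in> \<psi> ` W"
            then obtain Z where Z: "Z \<in> W" "Y = \<psi> Z" by auto
            have "d \<le> card (\<psi> Z)" using pre[of "\<psi> Z"] \<psi> Z unfolding W_def by auto
            then show "Y \<in> W" using nn Z \<psi> unfolding W_def by force
          qed
          moreover have "inj_on \<psi> W"
          proof (rule inj_onI)
            fix Z1 Z2 assume "Z1 \<in> W" "Z2 \<in> W" "\<psi> Z1 = \<psi> Z2"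
            then have "\<phi> (\<psi> Z1) = \<phi> (\<psi> Z2)" "Z1 \<in> P" "Z2 \<in> P" unfolding W_def by auto
            then show "Z1 = Z2" using \<psi> by metis
          qed
          moreover have "finite W" using finP unfolding W_def by simp
          ultimately have "\<psi> ` W = W" using endo_inj_surj by blast
          moreover have "Q0 \<in> W" using Q0P q unfolding W_def by simp
          ultimately obtain Z where Z: "Z \<in> W" "Q0 = \<psi> Z" by auto
          then have "\<phi> Q0 = Z" using \<psi> unfolding W_def by auto
          then show False using Z Q0P q Dm0 unfolding W_def e_def E_def by auto
        qed
      qed
      define R where "R = \<psi> Dm"
      have RP: "R \<in> P" "\<phi> R = Dm" "card Q0 < card R" using \<psi> Dm unfolding R_def by auto
      have cDE: "card Dm < card E" using Dm Dm0 unfolding e_def by simp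
      have DmE: "Dm \<noteq> E" using cDE by auto
      have DEd: "Dm \<inter> E = {}" using disj Dm EP DmE by blast
      have RQ0: "R \<noteq> Q0" using RP by auto
      have fQ0: "f ` Q0 \<subseteq> E" using phi_img[OF fT Q0P(1)] unfolding E_def \<phi>_def .
      have finE: "finite E" using finB EP by simp
      have finQ0: "finite Q0" using finB Q0P by simp
      have cfQ: "card (f ` Q0) \<le> d" using card_image_le[OF finQ0, of f] qd by simp
      have "d - card (f ` Q0) \<le> card (E - f ` Q0)"
        using card_Diff_subset[OF finite_subset[OF fQ0 finE] fQ0] card_mono[OF finE fQ0] cDE Dm unfolding e_def by simp
      then obtain T' where T': "T' \<subseteq> E - f ` Q0" "card T' = d - card (f ` Q0)" "finite T'"
        using obtain_subset_with_card_n by metis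
      define T where "T = f ` Q0 \<union> T'"
      have cT: "card T = d" unfolding T_def using T' cfQ finite_subset[OF fQ0 finE]
        by (subst card_Un_disjoint) auto
      have TE: "T \<subseteq> E" "f ` Q0 \<subseteq> T" unfolding T_def using T' fQ0 by auto
      obtain \<alpha> where \<alpha>: "bij_betw \<alpha> Dm T" using finite_same_card_bij finB Dm cT TE finE finite_subset by metis
      have \<alpha>': "inj_on \<alpha> Dm" "\<alpha> ` Dm \<subseteq> E" "f ` Q0 \<subseteq> \<alpha> ` Dm" using \<alpha> TE unfolding bij_betw_def by auto
      have nb: "\<forall>Z\<in>P. \<not> (card Dm < card Z \<and> card Z < card E)" using dge Dm unfolding e_def by force
      obtain \<beta> where \<beta>: "\<beta> ` E = Dm" "swapmap Dm E \<alpha> \<beta> \<in> G"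
        using swap_consec[OF Dm(1) EP cDE nb \<alpha>'(1,2)] by blast
      define t where "t = swapmap Dm E \<alpha> \<beta>"
      have tv: "z \<in> X \<Longrightarrow> t z = (if z \<in> Dm then \<alpha> z else if z \<in> E then \<beta> z else z)" for z
        unfolding t_def swapmap_def by simp
      define f' where "f' = restrict (\<lambda>x. if blk x = R then (SOME y. y \<in> E \<and> \<beta> y = f x)
          else if blk x = Q0 then inv_into Dm \<alpha> (f x) else f x) X"
      have A1: "f x \<in> Dm" if "x \<in> X" "blk x = R" for x using fin that RP by auto
      have A2: "f x \<in> E" if "x \<in> X" "blk x = Q0" for x using fin that unfolding E_def by auto
      have A3: "f x \<notin> Dm \<and> f x \<notin> E" if x: "x \<in> X" "blk x \<noteq> R" "blk x \<noteq> Q0" for x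
      proof -
        have "\<phi> (blk x) \<noteq> Dm" using \<phi>inj[OF blk(1)[OF x(1)] RP(1)] RP(2) x by auto
        moreover have "\<phi> (blk x) \<noteq> E" using \<phi>inj[OF blk(1)[OF x(1)] Q0P(1)] x unfolding E_def by auto
        moreover have "f x \<in> \<phi> (blk x)" "\<phi> (blk x) \<in> P" using fin[OF x(1)] \<phi>P[OF blk(1)[OF x(1)]] by auto
        ultimately show ?thesis using disj[of "\<phi> (blk x)" Dm "f x"] disj[of "\<phi> (blk x)" E "f x"] Dm(1) EP by blast
      qed
      have f'R: "f' x \<in> E \<and> \<beta> (f' x) = f x" if x: "x \<in> X" "blk x = R" for x
      proof -
        have "\<exists>y. y \<in> E \<and> \<beta> y = f x" using A1[OF x] \<beta>(1) by auto
        then have "(SOME y. y \<in> E \<and> \<beta> y = f x) \<in> E \<and> \<beta> (SOME y. y \<in> E \<and> \<beta> y = f x) = f x"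
          by (rule someI_ex)
        then show ?thesis unfolding f'_def using x by simp
      qed
      have f'Q: "f' x \<in> Dm \<and> \<alpha> (f' x) = f x" if x: "x \<in> X" "blk x = Q0" for x
      proof -
        have "f x \<in> \<alpha> ` Dm" using \<alpha>'(3) x blk(2)[OF x(1)] by auto
        then have "inv_into Dm \<alpha> (f x) \<in> Dm \<and> \<alpha> (inv_into Dm \<alpha> (f x)) = f x"
          by (auto intro: inv_into_into f_inv_into_f)
        then show ?thesis unfolding f'_def using x RQ0 by simp
      qed
      have f'O: "f' x = f x" if x: "x \<in> X" "blk x \<noteq> R" "blk x \<noteq> Q0" for x
        unfolding f'_def using x by simp
      have DmX: "Dm \<subseteq> X" and EX: "E \<subseteq> X" using subX Dm EP by auto
      have comp: "compose X t f' = f"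
      proof (rule ext)
        fix x show "compose X t f' x = f x"
        proof (cases "x \<in> X")
          case True
          have "t (f' x) = f x"
          proof -
            consider "blk x = R" | "blk x = Q0" | "blk x \<noteq> R" "blk x \<noteq> Q0" by blast
            then show ?thesis
            proof cases
              case 1
              have "f' x \<in> E" "f' x \<notin> Dm" using f'R[OF True 1] DEd by auto
              then show ?thesis using tv EX f'R[OF True 1] by auto
            next
              case 2 then show ?thesis using tv DmX f'Q[OF True 2] by auto
            next
              case 3 then show ?thesis using tv f'O[OF True 3] A3[OF True 3] T_into[OF fT True] by auto
            qed
          qed
          then show ?thesis unfolding compose_def using True by simp
        next
          case False then show ?thesis using fT unfolding compose_def T_map_def by (auto simp: PiE_def extensional_def)
        qed
      qed
      have f'blk: "blk (f' x) = (if blk x = R then E else if blk x = Q0 then Dm else \<phi> (blk x))"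
        if x: "x \<in> X" for x
      proof -
        consider "blk x = R" | "blk x = Q0" | "blk x \<noteq> R" "blk x \<noteq> Q0" by blast
        then show ?thesis
        proof cases
          case 1 then show ?thesis using f'R[OF x 1] blk_eq EP by auto
        next
          case 2 then show ?thesis using f'Q[OF x 2] blk_eq Dm RQ0 by auto
        next
          case 3 then show ?thesis using f'O[OF x 3] fin[OF x] by auto
        qed
      qed
      have f'X: "f' \<in> X \<rightarrow>\<^sub>E X"
      proof -
        have "f' x \<in> X" if x: "x \<in> X" for x
        proof -
          consider "blk x = R" | "blk x = Q0" | "blk x \<noteq> R" "blk x \<noteq> Q0" by blast
          then show ?thesis
          proof cases
            case 1 then show ?thesis using f'R[OF x 1] EX by auto
          next
            case 2 then show ?thesis using f'Q[OF x 2] DmX by auto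
          next
            case 3 then show ?thesis using f'O[OF x 3] T_into[OF fT x] by simp
          qed
        qed
        moreover have "f' \<in> extensional X" unfolding f'_def by simp
        ultimately show ?thesis by (simp add: PiE_iff)
      qed
      have f'val: "f' x \<in> X" if "x \<in> X" for x using f'X that by auto
      have f'T: "f' \<in> T_map X P"
      proof -
        have "\<exists>C\<in>P. f' ` Q \<subseteq> C" if Q: "Q \<in> P" for Q
        proof -
          define C where "C = (if Q = R then E else if Q = Q0 then Dm else \<phi> Q)"
          have CP: "C \<in> P" unfolding C_def using EP Dm(1) \<phi>P[OF Q] by simp
          have "f' z \<in> C" if z: "z \<in> Q" for z
          proof -
            have zX: "z \<in> X" using z Q subX by auto
            have "blk z = Q" using blk_eq[OF Q z] .
            then have "blk (f' z) = C" using f'blk[OF zX] unfolding C_def by simp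
            then show ?thesis using blk(2)[OF f'val[OF zX]] by simp
          qed
          then show ?thesis using CP by blast
        qed
        then show ?thesis using f'X unfolding T_map_def by blast
      qed
      have hitf: "\<exists>x\<in>X. f x \<in> C" if "C \<in> P" for C
        using fS that unfolding Sigma_map_def by blast
      have hit': "\<exists>x\<in>X. f' x \<in> C" if C: "C \<in> P" for C
      proof (cases "C = Dm")
        case True
        obtain x where x: "x \<in> Q0" using nonemptyB[OF Q0P(1)] by blast
        have xX: "x \<in> X" using subX[OF Q0P(1)] x by blast
        have "f' x \<in> Dm" using f'Q[OF xX blk_eq[OF Q0P(1) x]] by simp
        then show ?thesis using xX True by blast
      next
        case F1: False
        show ?thesis
        proof (cases "C = E")
          case True
          obtain x where x: "x \<in> R" using nonemptyB[OF RP(1)] by blast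
          have xX: "x \<in> X" using subX[OF RP(1)] x by blast
          have "f' x \<in> E" using f'R[OF xX blk_eq[OF RP(1) x]] by simp
          then show ?thesis using xX True by blast
        next
          case F2: False
          obtain x where x: "x \<in> X" "f x \<in> C" using hitf[OF C] by blast
          have nD: "f x \<notin> Dm"
          proof
            assume "f x \<in> Dm" then have "C = Dm" using disj[OF C Dm(1) x(2)] by simp
            then show False using F1 by simp
          qed
          have nE: "f x \<notin> E"
          proof
            assume "f x \<in> E" then have "C = E" using disj[OF C EP x(2)] by simp
            then show False using F2 by simp
          qed
          have b1: "blk x \<noteq> R" using nD A1[OF x(1)] by metis
          have b2: "blk x \<noteq> Q0" using nE A2[OF x(1)] by metis
          have "f' x = f x" using f'O[OF x(1) b1 b2] .
          then show ?thesis using x by metis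
        qed
      qed
      have hit'': "f' ` X \<inter> C \<noteq> {}" if C: "C \<in> P" for C
      proof -
        obtain x where x: "x \<in> X" "f' x \<in> C" using hit'[OF C] by blast
        then have "f' x \<in> f' ` X \<inter> C" by simp
        then show ?thesis by blast
      qed
      have f'S: "f' \<in> Sigma_map X P"
        unfolding Sigma_map_def using f'T hit'' by simp
      have phi': "phi f' Q = (if Q = R then E else if Q = Q0 then Dm else \<phi> Q)" if Q: "Q \<in> P" for Q
      proof -
        obtain z where z: "z \<in> Q" using nonemptyB Q by blast
        have zX: "z \<in> X" using z Q subX by auto
        have bz: "blk z = Q" using blk_eq[OF Q z] .
        have e1: "phi f' Q = blk (f' z)" using phi(1)[OF f'T Q z] by (rule sym)
        have e2: "blk (f' z) = (if blk z = R then E else if blk z = Q0 then Dm else \<phi> (blk z))"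
          using f'blk[OF zX] .
        show ?thesis unfolding e1 e2 bz by (rule refl)
      qed
      define g where "g Q = (int (card (\<phi> Q)) - int (card Q))^2" for Q
      define g' where "g' Q = (int (card (phi f' Q)) - int (card Q))^2" for Q
      have gg: "g' Q = g Q" if "Q \<in> P - {Q0, R}" for Q using phi' that unfolding g_def g'_def by auto
      have s1: "sum h P = h Q0 + h R + sum h (P - {Q0, R})" for h :: "'a set \<Rightarrow> int"
      proof -
        have "sum h P = h Q0 + sum h (P - {Q0})" using sum.remove[OF finP Q0P(1)] .
        moreover have "sum h (P - {Q0}) = h R + sum h (P - {Q0} - {R})"
          using sum.remove[of "P - {Q0}" R] finP RP RQ0 by auto
        moreover have "P - {Q0} - {R} = P - {Q0, R}" by auto
        ultimately show ?thesis by simp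
      qed
      have pf: "pot f = g Q0 + g R + sum g (P - {Q0, R})" unfolding pot_def g_def \<phi>_def using s1 by simp
      have pf': "pot f' = g' Q0 + g' R + sum g (P - {Q0, R})"
      proof -
        have "sum g' (P - {Q0, R}) = sum g (P - {Q0, R})" using gg by (rule sum.cong[OF refl])
        then show ?thesis unfolding pot_def g'_def[symmetric] using s1[of g'] by simp
      qed
      have "g' Q0 + g' R < g Q0 + g R"
        using pot_ineq[of "int (card Dm)" "int (card E)" "int (card Q0)" "int (card R)"] cDE RP(3)
        unfolding g_def g'_def using phi' Q0P(1) RP(1,2) RQ0 unfolding E_def by simp
      then have "pot f' < pot f" using pf pf' by simp
      moreover have "0 \<le> pot f'" unfolding pot_def by (rule sum_nonneg) simp
      ultimately have "nat (pot f') < n" using n by simp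
      then have "f' \<in> G" using less f'S by blast
      then show "f \<in> G" using comp G_comp \<beta>(2) unfolding t_def by metis
    qed
  qed
qed

lemma main: "f \<in> Sigma_map X P \<Longrightarrow> f \<in> G" using main_aux by blast

end

theorem theorem4p6:
  fixes X :: "'a set" and P :: "'a set set"
    and b c :: "nat \<Rightarrow> ('a \<Rightarrow> 'a)" and U :: "('a \<Rightarrow> 'a) set"
  assumes "finite X" and "X \<noteq> {}" and "partition_on X P"
    and "\<And>i. 1 \<le> i \<Longrightarrow> i \<le> num_sizes P - 1 \<Longrightarrow> b i \<in> B_set X P i"
    and "\<And>i. i \<in> {i. 1 \<le> i \<and> i \<le> num_sizes P \<and>
               ((i = 1 \<and> lsize P 1 \<ge> 2) \<or> (i \<ge> 2 \<and> lsize P i - lsize P (i - 1) \<ge> 2))}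
             \<Longrightarrow> c i \<in> C_set X P i"
    and "U = b ` {1..num_sizes P - 1} \<union>
             c ` {i. 1 \<le> i \<and> i \<le> num_sizes P \<and>
               ((i = 1 \<and> lsize P 1 \<ge> 2) \<or> (i \<ge> 2 \<and> lsize P i - lsize P (i - 1) \<ge> 2))}"
  shows "sgen X (S_map X P \<union> U) = Sigma_map X P"
proof -
  interpret gens X P b c U
    by unfold_locales (use assms in auto)
  show ?thesis using G_sig main by blast
qed

end
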